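(* If $A=(A_m)_{m=0}^\infty$ is an Appell sequence, then for $n\ge2$, \[ \operatorname{Var}\left(A_\lambda(x):\lambda\vdash n\right) = \mathbb{E}\left(A^2_{\lambda}(x):\lambda\vdash n\right) - \mathbb{E}\bigl(A_{\lambda}(x):\lambda\vdash n\bigr)^2 = O(x^{2n-4}), \] i.e. this variance is a polynomial in $x$ of degree at most $2n-4$.
   Context: An Appell sequence is a sequence of polynomials $(A_m)_{m\ge0}$ with $A_0=1$ and $A_m'=mA_{m-1}$ for $m\ge1$. For a partition $\lambda$ of length $r$, let $(n_1,\dots,n_r)=(\lambda_r,\lambda_{r-1}+1,\dots,\lambda_1+r-1)$ and $A_\lambda=\operatorname{Wr}[A_{n_1},\dots,A_{n_r}]/\Delta(n_1,\dots,n_r)$, where $\operatorname{Wr}$ is the Wronskian and $\Delta$ the Vandermonde determinant $\prod_{i<j}(x_j-x_i)$. Expectations and variance are with respect to Plancherel measure $\mathbb{P}(\lambda)=F_\lambda^2/n!$ on partitions $\lambda\vdash n$, $F_\lambda$ being the number of standard Young tableaux of shape $\lambda$. *)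

theory Defs
  imports "HOL-Computational_Algebra.Polynomial" "HOL-Library.FuncSet"
          "Jordan_Normal_Form.Determinant"
begin

definition appell :: "(nat \<Rightarrow> 'a::field_char_0 poly) \<Rightarrow> bool" where
  "appell A \<longleftrightarrow> A 0 = 1 \<and> (\<forall>m\<ge>1. pderiv (A m) = smult (of_nat m) (A (m - 1)))"

definition is_partition :: "nat list \<Rightarrow> bool" where
  "is_partition lam \<longleftrightarrow> sorted_wrt (\<ge>) lam \<and> (\<forall>p\<in>set lam. 0 < p)"

definition partitions_of :: "nat \<Rightarrow> nat list set" where
  "partitions_of n = {lam. is_partition lam \<and> sum_list lam = n}"

(* Young diagram cells (i,j), 0-indexed: row i < r, column j < lambda_(i+1) *)
definition cells :: "nat list \<Rightarrow> (nat \<times> nat) set" where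
  "cells lam = {(i, j). i < length lam \<and> j < lam ! i}"

definition SYT :: "nat list \<Rightarrow> ((nat \<times> nat) \<Rightarrow> nat) set" where
  "SYT lam = {T \<in> cells lam \<rightarrow>\<^sub>E {1..sum_list lam}.
      bij_betw T (cells lam) {1..sum_list lam} \<and>
      (\<forall>i j. (i, j + 1) \<in> cells lam \<longrightarrow> T (i, j) < T (i, j + 1)) \<and>
      (\<forall>i j. (i + 1, j) \<in> cells lam \<longrightarrow> T (i, j) < T (i + 1, j))}"

definition num_SYT :: "nat list \<Rightarrow> nat" where
  "num_SYT lam = card (SYT lam)"

(* (n_1,...,n_r) = (lambda_r, lambda_(r-1)+1, ..., lambda_1+r-1), 0-indexed: n_k = lambda_(r-k) + (k-1) *)
definition shifted_parts :: "nat list \<Rightarrow> nat list" where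
  "shifted_parts lam = map (\<lambda>k. rev lam ! k + k) [0..<length lam]"

definition wronskian :: "'a::idom poly list \<Rightarrow> 'a poly" where
  "wronskian fs = det (mat (length fs) (length fs) (\<lambda>(i, j). (pderiv ^^ i) (fs ! j)))"

definition vandermonde :: "nat list \<Rightarrow> int" where
  "vandermonde xs = (\<Prod>j<length xs. \<Prod>i<j. int (xs ! j) - int (xs ! i))"

definition appell_schur :: "(nat \<Rightarrow> 'a::field_char_0 poly) \<Rightarrow> nat list \<Rightarrow> 'a poly" where
  "appell_schur A lam =
     smult (inverse (of_int (vandermonde (shifted_parts lam))))
           (wronskian (map A (shifted_parts lam)))"

definition plancherel :: "nat \<Rightarrow> nat list \<Rightarrow> 'a::field_char_0" where
  "plancherel n lam = of_nat (num_SYT lam ^ 2) / of_nat (fact n)"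

definition plancherel_expect :: "nat \<Rightarrow> (nat list \<Rightarrow> 'a::field_char_0 poly) \<Rightarrow> 'a poly" where
  "plancherel_expect n f = (\<Sum>lam\<in>partitions_of n. smult (plancherel n lam) (f lam))"

end

theory Submission
  imports Defs
begin

definition dc :: "(nat \<times> nat) set \<Rightarrow> bool" where
  "dc D \<longleftrightarrow> (\<forall>i j i' j'. (i, j) \<in> D \<longrightarrow> i' \<le> i \<longrightarrow> j' \<le> j \<longrightarrow> (i', j') \<in> D)"

definition SYTs :: "(nat \<times> nat) set \<Rightarrow> ((nat \<times> nat) \<Rightarrow> nat) set" where
  "SYTs D = {T \<in> D \<rightarrow>\<^sub>E {1..card D}.
      bij_betw T D {1..card D} \<and>
      (\<forall>i j. (i, j + 1) \<in> D \<longrightarrow> T (i, j) < T (i, j + 1)) \<and>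
      (\<forall>i j. (i + 1, j) \<in> D \<longrightarrow> T (i, j) < T (i + 1, j))}"

definition FF :: "(nat \<times> nat) set \<Rightarrow> nat" where
  "FF D = card (SYTs D)"

definition Cor :: "(nat \<times> nat) set \<Rightarrow> (nat \<times> nat) set" where
  "Cor D = {c \<in> D. dc (D - {c})}"

definition Add :: "(nat \<times> nat) set \<Rightarrow> (nat \<times> nat) set" where
  "Add D = {a. a \<notin> D \<and> dc (insert a D)}"

definition DS :: "nat \<Rightarrow> (nat \<times> nat) set set" where
  "DS n = {D. finite D \<and> dc D \<and> card D = n}"

lemma dcD: "dc D \<Longrightarrow> (i, j) \<in> D \<Longrightarrow> i' \<le> i \<Longrightarrow> j' \<le> j \<Longrightarrow> (i', j') \<in> D"
  unfolding dc_def by blast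

lemma finite_SYTs: "finite D \<Longrightarrow> finite (SYTs D)"
proof -
  assume "finite D"
  have "SYTs D \<subseteq> D \<rightarrow>\<^sub>E {1..card D}" unfolding SYTs_def by blast
  moreover have "finite (D \<rightarrow>\<^sub>E {1..card D})" using \<open>finite D\<close> by (simp add: finite_PiE)
  ultimately show ?thesis by (rule finite_subset)
qed

lemma FF_empty: "FF {} = 1"
proof -
  have "SYTs {} = {\<lambda>_. undefined}"
    unfolding SYTs_def by (auto simp: bij_betw_def)
  then show ?thesis unfolding FF_def by simp
qed

lemma SYTs_mono:
  assumes T: "T \<in> SYTs D" and d: "dc D" and y: "(i, j) \<in> D" and le: "i' \<le> i" "j' \<le> j"
  shows "T (i', j') \<le> T (i, j)"
proof -
  have row: "T (a, b) \<le> T (a, b + k)" if "(a, b + k) \<in> D" for a b k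
    using that
  proof (induction k)
    case 0 then show ?case by simp
  next
    case (Suc k)
    have "(a, b + k) \<in> D" using dcD[OF d Suc.prems] by simp
    then have "T (a, b) \<le> T (a, b + k)" using Suc.IH by simp
    also have "T (a, b + k) < T (a, b + k + 1)" using T Suc.prems unfolding SYTs_def by auto
    finally show ?case by simp
  qed
  have col: "T (a, b) \<le> T (a + k, b)" if "(a + k, b) \<in> D" for a b k
    using that
  proof (induction k)
    case 0 then show ?case by simp
  next
    case (Suc k)
    have "(a + k, b) \<in> D" using dcD[OF d Suc.prems] by simp
    then have "T (a, b) \<le> T (a + k, b)" using Suc.IH by simp
    also have "T (a + k, b) < T (a + k + 1, b)" using T Suc.prems unfolding SYTs_def by auto
    finally show ?case by simp
  qed
  have "(i', j) \<in> D" using dcD[OF d y le(1)] by simp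
  then have "T (i', j') \<le> T (i', j)" using row[of i' j' "j - j'"] le by simp
  also have "T (i', j) \<le> T (i, j)" using col[of i' "i - i'" j] le y by simp
  finally show ?thesis .
qed

lemma SYTsD:
  assumes "T \<in> SYTs D"
  shows "T \<in> D \<rightarrow>\<^sub>E {1..card D}" "bij_betw T D {1..card D}"
    "\<And>i j. (i, j + 1) \<in> D \<Longrightarrow> T (i, j) < T (i, j + 1)"
    "\<And>i j. (i + 1, j) \<in> D \<Longrightarrow> T (i, j) < T (i + 1, j)"
  using assms unfolding SYTs_def by auto

lemma SYTs_top_Cor:
  assumes T: "T \<in> SYTs D" and d: "dc D" and c: "c \<in> D" and Tc: "T c = card D"
  shows "c \<in> Cor D"
proof -
  obtain ci cj where cc: "c = (ci, cj)" by fastforce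
  have inj: "inj_on T D" using SYTsD(2)[OF T] by (simp add: bij_betw_def)
  have "dc (D - {c})"
    unfolding dc_def
  proof (intro allI impI)
    fix i j i' j'
    assume y: "(i, j) \<in> D - {c}" and le: "i' \<le> i" "j' \<le> j"
    have "(i', j') \<in> D" using dcD[OF d _ le] y by auto
    moreover have "(i', j') \<noteq> c"
    proof
      assume eq: "(i', j') = c"
      have "T c \<le> T (i, j)" using SYTs_mono[OF T d _ le] y eq by auto
      moreover have "T (i, j) \<le> card D" using SYTsD(1)[OF T] y by auto
      ultimately have "T (i, j) = T c" using Tc by simp
      then have "(i, j) = c" using inj y c by (auto dest: inj_onD)
      then show False using y by auto
    qed
    ultimately show "(i', j') \<in> D - {c}" by auto
  qed
  then show ?thesis using c unfolding Cor_def by auto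
qed

lemma SYTs_restrict:
  assumes T: "T \<in> SYTs D" and d: "dc D" and f: "finite D" and c: "c \<in> D" and Tc: "T c = card D"
  shows "restrict T (D - {c}) \<in> SYTs (D - {c})"
proof -
  have inj: "inj_on T D" and im: "T ` D = {1..card D}" using SYTsD(2)[OF T] by (auto simp: bij_betw_def)
  have cd: "card (D - {c}) = card D - 1" using c f by simp
  have im2: "T ` (D - {c}) = {1..card D - 1}"
  proof -
    have "T ` (D - {c}) = T ` D - T ` {c}" using inj c by (simp add: inj_on_image_set_diff)
    also have "\<dots> = {1..card D} - {card D}" using im Tc by simp
    also have "\<dots> = {1..card D - 1}" by auto
    finally show ?thesis .
  qed
  have bij: "bij_betw (restrict T (D - {c})) (D - {c}) {1..card D - 1}"
    unfolding bij_betw_def using im2 inj_on_subset[OF inj]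
    by (auto simp: inj_on_def)
  have big: "T y < card D" if "y \<in> D" "y \<noteq> c" for y
  proof -
    have "T y \<le> card D" using SYTsD(1)[OF T] that by auto
    moreover have "T y \<noteq> T c" using inj that c by (auto dest: inj_onD)
    ultimately show ?thesis using Tc by simp
  qed
  have row: "restrict T (D - {c}) (i, j) < restrict T (D - {c}) (i, j + 1)" if "(i, j + 1) \<in> D - {c}" for i j
  proof -
    have ij: "(i, j) \<in> D" using dcD[OF d, of i "j+1" i j] that by auto
    have lt: "T (i, j) < T (i, j + 1)" using SYTsD(3)[OF T] that by auto
    have "(i, j) \<noteq> c" using big[of "(i, j + 1)"] that lt Tc by auto
    then show ?thesis using ij that lt by auto
  qed
  have col: "restrict T (D - {c}) (i, j) < restrict T (D - {c}) (i + 1, j)" if "(i + 1, j) \<in> D - {c}" for i j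
  proof -
    have ij: "(i, j) \<in> D" using dcD[OF d, of "i+1" j i j] that by auto
    have lt: "T (i, j) < T (i + 1, j)" using SYTsD(4)[OF T] that by auto
    have "(i, j) \<noteq> c" using big[of "(i + 1, j)"] that lt Tc by auto
    then show ?thesis using ij that lt by auto
  qed
  have pie: "restrict T (D - {c}) \<in> (D - {c}) \<rightarrow>\<^sub>E {1..card D - 1}"
    using im2 by auto
  show ?thesis unfolding SYTs_def cd using pie bij row col by blast
qed

lemma SYTs_extend:
  assumes c: "c \<in> Cor D" and d: "dc D" and f: "finite D" and T: "T \<in> SYTs (D - {c})"
  shows "T(c := card D) \<in> SYTs D"
proof -
  have cD: "c \<in> D" and d2: "dc (D - {c})" using c unfolding Cor_def by auto
  have cd: "card (D - {c}) = card D - 1" using cD f by simp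
  have pos: "card D > 0" using cD f card_gt_0_iff by blast
  have T1: "T \<in> (D - {c}) \<rightarrow>\<^sub>E {1..card D - 1}" using SYTsD(1)[OF T] cd by simp
  have Tb: "bij_betw T (D - {c}) {1..card D - 1}" using SYTsD(2)[OF T] cd by simp
  let ?T = "T(c := card D)"
  have small: "T y < card D" if "y \<in> D - {c}" for y
  proof -
    have "T y \<in> {1..card D - 1}" using T1 that by (meson PiE_mem)
    then show ?thesis using pos by auto
  qed
  have pie: "?T \<in> D \<rightarrow>\<^sub>E {1..card D}"
    using T1 cD pos small by (auto simp: PiE_def Pi_def extensional_def less_imp_le)
  have bij: "bij_betw ?T D {1..card D}"
  proof -
    have inj: "inj_on T (D - {c})" and im: "T ` (D - {c}) = {1..card D - 1}"
      using Tb by (auto simp: bij_betw_def)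
    have "inj_on ?T D"
    proof (rule inj_onI)
      fix x y assume xy: "x \<in> D" "y \<in> D" "?T x = ?T y"
      show "x = y"
      proof (cases "x = c"; cases "y = c")
        assume "x \<noteq> c" "y \<noteq> c" then show ?thesis using xy inj by (auto dest: inj_onD)
      next
        assume "x = c" "y \<noteq> c" then show ?thesis using xy small[of y] by auto
      next
        assume "x \<noteq> c" "y = c" then show ?thesis using xy small[of x] by auto
      qed simp
    qed
    moreover have "?T ` D = {1..card D}"
    proof -
      have "D = insert c (D - {c})" using cD by auto
      then have "?T ` D = insert (card D) (?T ` (D - {c}))" by (metis fun_upd_same image_insert)
      also have "?T ` (D - {c}) = T ` (D - {c})" by auto
      finally show ?thesis using im pos by auto
    qed
    ultimately show ?thesis by (simp add: bij_betw_def)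
  qed
  have above: False if "c = (i, j)" "y \<in> D" "y \<noteq> c" "i \<le> fst y" "j \<le> snd y" for i j y
  proof -
    have "y \<in> D - {c}" using that by auto
    then have "c \<in> D - {c}" using dcD[OF d2, of "fst y" "snd y" i j] that by auto
    then show False by simp
  qed
  have row: "?T (i, j) < ?T (i, j + 1)" if "(i, j + 1) \<in> D" for i j
  proof -
    have ij: "(i, j) \<in> D" using dcD[OF d that] by auto
    show ?thesis
    proof (cases "(i, j + 1) = c")
      case True
      then have "(i, j) \<noteq> c" by auto
      then show ?thesis using True small[of "(i, j)"] ij by auto
    next
      case False
      have "(i, j) \<noteq> c" using above[of i j "(i, j + 1)"] False that by auto
      then show ?thesis using False ij that SYTsD(3)[OF T, of i j] by auto
    qed
  qed
  have col: "?T (i, j) < ?T (i + 1, j)" if "(i + 1, j) \<in> D" for i j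
  proof -
    have ij: "(i, j) \<in> D" using dcD[OF d that] by auto
    show ?thesis
    proof (cases "(i + 1, j) = c")
      case True
      then have "(i, j) \<noteq> c" by auto
      then show ?thesis using True small[of "(i, j)"] ij by auto
    next
      case False
      have "(i, j) \<noteq> c" using above[of i j "(i + 1, j)"] False that by auto
      then show ?thesis using False ij that SYTsD(4)[OF T, of i j] by auto
    qed
  qed
  show ?thesis unfolding SYTs_def using pie bij row col by blast
qed

lemma card_SYTs_top:
  assumes c: "c \<in> Cor D" and d: "dc D" and f: "finite D"
  shows "card {T \<in> SYTs D. T c = card D} = FF (D - {c})"
  unfolding FF_def
proof (rule bij_betw_same_card[of "\<lambda>T. restrict T (D - {c})"], rule bij_betw_byWitness[where f' = "\<lambda>T. T(c := card D)"])
  have cD: "c \<in> D" using c unfolding Cor_def by auto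
  show "\<forall>a\<in>{T \<in> SYTs D. T c = card D}. (restrict a (D - {c}))(c := card D) = a"
  proof
    fix T assume T: "T \<in> {T \<in> SYTs D. T c = card D}"
    have "T \<in> extensional D" using SYTsD(1) T by (auto simp: PiE_def)
    then show "(restrict T (D - {c}))(c := card D) = T" using T cD
      by (auto simp: extensional_def fun_eq_iff)
  qed
  show "\<forall>a'\<in>SYTs (D - {c}). restrict (a'(c := card D)) (D - {c}) = a'"
  proof
    fix T assume T: "T \<in> SYTs (D - {c})"
    have "T \<in> extensional (D - {c})" using SYTsD(1)[OF T] by (auto simp: PiE_def)
    then show "restrict (T(c := card D)) (D - {c}) = T"
      by (auto simp: extensional_def fun_eq_iff)
  qed
  show "(\<lambda>T. restrict T (D - {c})) ` {T \<in> SYTs D. T c = card D} \<subseteq> SYTs (D - {c})"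
    using SYTs_restrict[OF _ d f cD] by auto
  show "(\<lambda>T. T(c := card D)) ` SYTs (D - {c}) \<subseteq> {T \<in> SYTs D. T c = card D}"
    using SYTs_extend[OF c d f] by auto
qed

lemma FF_rec:
  assumes d: "dc D" and f: "finite D" and ne: "D \<noteq> {}"
  shows "FF D = (\<Sum>c\<in>Cor D. FF (D - {c}))"
proof -
  have pos: "card D > 0" using f ne by (simp add: card_gt_0_iff)
  have eq: "SYTs D = (\<Union>c\<in>Cor D. {T \<in> SYTs D. T c = card D})"
  proof (intro equalityI subsetI)
    fix T assume T: "T \<in> SYTs D"
    have "card D \<in> T ` D" using SYTsD(2)[OF T] pos by (auto simp: bij_betw_def)
    then obtain c where c: "c \<in> D" "T c = card D" by auto
    then have "c \<in> Cor D" using SYTs_top_Cor[OF T d] by auto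
    then show "T \<in> (\<Union>c\<in>Cor D. {T \<in> SYTs D. T c = card D})" using T c by auto
  qed auto
  have fC: "finite (Cor D)" using f unfolding Cor_def by auto
  have "FF D = (\<Sum>c\<in>Cor D. card {T \<in> SYTs D. T c = card D})"
    unfolding FF_def
    apply (subst eq)
    apply (rule card_UN_disjoint[OF fC])
    subgoal using finite_SYTs[OF f] by auto
    subgoal
    proof (intro ballI impI)
      fix c c' assume cc: "c \<in> Cor D" "c' \<in> Cor D" "c \<noteq> c'"
      show "{T \<in> SYTs D. T c = card D} \<inter> {T \<in> SYTs D. T c' = card D} = {}"
      proof (rule ccontr)
        assume "{T \<in> SYTs D. T c = card D} \<inter> {T \<in> SYTs D. T c' = card D} \<noteq> {}"
        then obtain T where T: "T \<in> SYTs D" "T c = card D" "T c' = card D" by auto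
        have "inj_on T D" using SYTsD(2)[OF T(1)] by (simp add: bij_betw_def)
        moreover have "c \<in> D" "c' \<in> D" using cc unfolding Cor_def by auto
        ultimately have "c = c'" using T by (metis inj_onD)
        then show False using cc by simp
      qed
    qed
    done
  also have "\<dots> = (\<Sum>c\<in>Cor D. FF (D - {c}))"
    by (rule sum.cong[OF refl], rule card_SYTs_top[OF _ d f])
  finally show ?thesis .
qed


lemma downset_nat:
  assumes f: "finite S" and d: "\<And>x y. x \<in> S \<Longrightarrow> y \<le> x \<Longrightarrow> y \<in> S"
  shows "S = {..<card S}"
proof -
  have "S \<subseteq> {..<card S}"
  proof
    fix x assume x: "x \<in> S"
    have "{..x} \<subseteq> S" using d x by auto
    then have "card {..x} \<le> card S" using f by (rule card_mono[rotated])
    then show "x \<in> {..<card S}" by simp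
  qed
  then show ?thesis using f by (intro card_subset_eq) auto
qed

definition rl :: "(nat \<times> nat) set \<Rightarrow> nat \<Rightarrow> nat" where
  "rl D i = card {j. (i, j) \<in> D}"

lemma mem_iff_rl:
  assumes f: "finite D" and d: "dc D"
  shows "(i, j) \<in> D \<longleftrightarrow> j < rl D i"
proof -
  have fin: "finite {j. (i, j) \<in> D}"
    using finite_vimageI[OF f, of "Pair i"] by (simp add: vimage_def inj_on_def)
  have "{j. (i, j) \<in> D} = {..<card {j. (i, j) \<in> D}}"
    by (rule downset_nat[OF fin]) (use dcD[OF d] in auto)
  then show ?thesis unfolding rl_def by (metis lessThan_iff mem_Collect_eq)
qed

lemma Cor_iff:
  assumes d: "dc D"
  shows "(i, j) \<in> Cor D \<longleftrightarrow> (i, j) \<in> D \<and> (i, j + 1) \<notin> D \<and> (i + 1, j) \<notin> D"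
proof
  assume c: "(i, j) \<in> Cor D"
  then have cD: "(i, j) \<in> D" and d2: "dc (D - {(i, j)})" unfolding Cor_def by auto
  have "(i, j + 1) \<notin> D"
  proof
    assume "(i, j + 1) \<in> D"
    then have "(i, j) \<in> D - {(i, j)}" using dcD[OF d2, of i "j+1" i j] by auto
    then show False by simp
  qed
  moreover have "(i + 1, j) \<notin> D"
  proof
    assume "(i + 1, j) \<in> D"
    then have "(i, j) \<in> D - {(i, j)}" using dcD[OF d2, of "i+1" j i j] by auto
    then show False by simp
  qed
  ultimately show "(i, j) \<in> D \<and> (i, j + 1) \<notin> D \<and> (i + 1, j) \<notin> D" using cD by auto
next
  assume h: "(i, j) \<in> D \<and> (i, j + 1) \<notin> D \<and> (i + 1, j) \<notin> D"
  have "dc (D - {(i, j)})"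
    unfolding dc_def
  proof (intro allI impI)
    fix a b a' b' assume ab: "(a, b) \<in> D - {(i, j)}" "a' \<le> a" "b' \<le> b"
    have "(a', b') \<in> D" using dcD[OF d _ ab(2,3)] ab(1) by auto
    moreover have "(a', b') \<noteq> (i, j)"
    proof
      assume eq: "(a', b') = (i, j)"
      show False
      proof (cases "a = i")
        case True
        then have "b \<ge> j + 1" using ab eq by auto
        then show False using dcD[OF d, of a b i "j+1"] ab True h by auto
      next
        case False
        then have "a \<ge> i + 1" using ab eq by auto
        then show False using dcD[OF d, of a b "i+1" j] ab eq h by auto
      qed
    qed
    ultimately show "(a', b') \<in> D - {(i, j)}" by auto
  qed
  then show "(i, j) \<in> Cor D" using h unfolding Cor_def by auto
qed

lemma Add_iff:
  assumes d: "dc D"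
  shows "(i, j) \<in> Add D \<longleftrightarrow> (i, j) \<notin> D \<and> (i > 0 \<longrightarrow> (i - 1, j) \<in> D) \<and> (j > 0 \<longrightarrow> (i, j - 1) \<in> D)"
proof
  assume a: "(i, j) \<in> Add D"
  then have nD: "(i, j) \<notin> D" and d2: "dc (insert (i, j) D)" unfolding Add_def by auto
  have "i > 0 \<longrightarrow> (i - 1, j) \<in> D" using dcD[OF d2, of i j "i - 1" j] nD by auto
  moreover have "j > 0 \<longrightarrow> (i, j - 1) \<in> D" using dcD[OF d2, of i j i "j - 1"] nD by auto
  ultimately show "(i, j) \<notin> D \<and> (i > 0 \<longrightarrow> (i - 1, j) \<in> D) \<and> (j > 0 \<longrightarrow> (i, j - 1) \<in> D)"
    using nD by auto
next
  assume h: "(i, j) \<notin> D \<and> (i > 0 \<longrightarrow> (i - 1, j) \<in> D) \<and> (j > 0 \<longrightarrow> (i, j - 1) \<in> D)"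
  have "dc (insert (i, j) D)"
    unfolding dc_def
  proof (intro allI impI)
    fix a b a' b' assume ab: "(a, b) \<in> insert (i, j) D" "a' \<le> a" "b' \<le> b"
    show "(a', b') \<in> insert (i, j) D"
    proof (cases "(a, b) \<in> D")
      case True then show ?thesis using dcD[OF d True ab(2,3)] by auto
    next
      case False
      then have ab2: "a = i" "b = j" using ab by auto
      show ?thesis
      proof (cases "a' = i \<and> b' = j")
        case True then show ?thesis by auto
      next
        case False
        then have "a' < i \<or> b' < j" using ab ab2 by auto
        then show ?thesis
        proof
          assume "a' < i"
          then show ?thesis using dcD[OF d, of "i - 1" j a' b'] h ab ab2 by auto
        next
          assume "b' < j"
          then show ?thesis using dcD[OF d, of i "j - 1" a' b'] h ab ab2 by auto
        qed
      qed
    qed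
  qed
  then show "(i, j) \<in> Add D" using h unfolding Add_def by auto
qed

lemma rl_mono:
  assumes f: "finite D" and d: "dc D"
  shows "rl D (Suc i) \<le> rl D i"
proof -
  have fin: "finite {j. (i, j) \<in> D}"
    using finite_vimageI[OF f, of "Pair i"] by (simp add: vimage_def inj_on_def)
  have "{j. (Suc i, j) \<in> D} \<subseteq> {j. (i, j) \<in> D}" using dcD[OF d, of "Suc i" _ i] by auto
  then show ?thesis unfolding rl_def using fin by (rule card_mono[rotated])
qed

lemma Cor_eq:
  assumes f: "finite D" and d: "dc D"
  shows "Cor D = (\<lambda>i. (i, rl D i - 1)) ` {i. rl D (Suc i) < rl D i}"
proof (intro equalityI subsetI)
  fix c assume c: "c \<in> Cor D"
  obtain i j where cc: "c = (i, j)" by fastforce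
  have h: "j < rl D i" "\<not> j + 1 < rl D i" "\<not> j < rl D (i + 1)"
    using c[unfolded cc Cor_iff[OF d]] mem_iff_rl[OF f d] by auto
  then show "c \<in> (\<lambda>i. (i, rl D i - 1)) ` {i. rl D (Suc i) < rl D i}"
    using cc by (auto intro!: image_eqI[of _ _ i])
next
  fix c assume "c \<in> (\<lambda>i. (i, rl D i - 1)) ` {i. rl D (Suc i) < rl D i}"
  then obtain i where i: "c = (i, rl D i - 1)" "rl D (Suc i) < rl D i" by auto
  then show "c \<in> Cor D" unfolding i(1) Cor_iff[OF d] mem_iff_rl[OF f d] by auto
qed

lemma Add_eq:
  assumes f: "finite D" and d: "dc D"
  shows "Add D = (\<lambda>i. (i, rl D i)) ` {i. i = 0 \<or> rl D i < rl D (i - 1)}"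
proof (intro equalityI subsetI)
  fix c assume c: "c \<in> Add D"
  obtain i j where cc: "c = (i, j)" by fastforce
  have h: "\<not> j < rl D i" "i > 0 \<longrightarrow> j < rl D (i - 1)" "j > 0 \<longrightarrow> j - 1 < rl D i"
    using c[unfolded cc Add_iff[OF d]] mem_iff_rl[OF f d] by auto
  then have "j = rl D i" by linarith
  then show "c \<in> (\<lambda>i. (i, rl D i)) ` {i. i = 0 \<or> rl D i < rl D (i - 1)}"
    using cc h by (auto intro!: image_eqI[of _ _ i])
next
  fix c assume "c \<in> (\<lambda>i. (i, rl D i)) ` {i. i = 0 \<or> rl D i < rl D (i - 1)}"
  then obtain i where i: "c = (i, rl D i)" "i = 0 \<or> rl D i < rl D (i - 1)" by auto
  then show "c \<in> Add D" unfolding i(1) Add_iff[OF d] mem_iff_rl[OF f d] by auto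
qed

lemma card_Add_Cor:
  assumes f: "finite D" and d: "dc D"
  shows "card (Add D) = card (Cor D) + 1"
proof -
  let ?K = "{i. rl D (Suc i) < rl D i}"
  have fK: "finite ?K"
  proof (rule finite_subset)
    show "?K \<subseteq> fst ` D"
    proof
      fix i assume "i \<in> ?K"
      then have "(i, 0) \<in> D" using mem_iff_rl[OF f d] by auto
      then show "i \<in> fst ` D" by force
    qed
  qed (use f in auto)
  have "card (Cor D) = card ?K"
    unfolding Cor_eq[OF f d] by (rule card_image) (auto simp: inj_on_def)
  moreover have "card (Add D) = card {i. i = 0 \<or> rl D i < rl D (i - 1)}"
    unfolding Add_eq[OF f d] by (rule card_image) (auto simp: inj_on_def)
  moreover have "{i. i = 0 \<or> rl D i < rl D (i - 1)} = insert 0 (Suc ` ?K)"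
  proof (intro equalityI subsetI)
    fix x assume x: "x \<in> {i. i = 0 \<or> rl D i < rl D (i - 1)}"
    show "x \<in> insert 0 (Suc ` ?K)"
    proof (cases x)
      case (Suc k)
      then have "k \<in> ?K" using x by auto
      then show ?thesis using Suc by blast
    qed simp
  qed auto
  moreover have "card (insert 0 (Suc ` ?K)) = card ?K + 1"
    using fK by (simp add: card_image)
  ultimately show ?thesis by simp
qed


lemma finite_Add:
  assumes f: "finite D" and d: "dc D"
  shows "finite (Add D)"
proof (rule finite_subset)
  show "Add D \<subseteq> insert (0, 0) ((\<lambda>(i, j). (i + 1, j)) ` D \<union> (\<lambda>(i, j). (i, j + 1)) ` D)"
  proof
    fix a assume a: "a \<in> Add D"
    obtain i j where aa: "a = (i, j)" by fastforce
    have h: "i > 0 \<longrightarrow> (i - 1, j) \<in> D" "j > 0 \<longrightarrow> (i, j - 1) \<in> D"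
      using a[unfolded aa Add_iff[OF d]] by auto
    show "a \<in> insert (0, 0) ((\<lambda>(i, j). (i + 1, j)) ` D \<union> (\<lambda>(i, j). (i, j + 1)) ` D)"
    proof (cases "i > 0")
      case True
      then have "a = (\<lambda>(i, j). (i + 1, j)) (i - 1, j)" using aa by auto
      then show ?thesis using h True by blast
    next
      case False
      show ?thesis
      proof (cases "j > 0")
        case True
        then have "a = (\<lambda>(i, j). (i, j + 1)) (i, j - 1)" using aa by auto
        then show ?thesis using h True by blast
      qed (use False aa in auto)
    qed
  qed
qed (use f in auto)

lemma finite_Cor: "finite D \<Longrightarrow> finite (Cor D)"
  unfolding Cor_def by auto

lemma Add_Cor: "a \<in> Add D \<Longrightarrow> dc D \<Longrightarrow> a \<in> Cor (insert a D)"
  unfolding Add_def Cor_def by (auto simp: insert_Diff_if)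

lemma Cor_Add: "c \<in> Cor D \<Longrightarrow> dc D \<Longrightarrow> c \<in> Add (D - {c}) \<and> insert c (D - {c}) = D"
  unfolding Add_def Cor_def by (auto simp: insert_absorb)

lemma pair_equiv:
  assumes d: "dc D" and ne: "a \<noteq> c"
  shows "(a \<in> Add D \<and> c \<in> Cor (insert a D)) \<longleftrightarrow> (c \<in> Cor D \<and> a \<in> Add (D - {c}))"
proof -
  have eq: "insert a D - {c} = insert a (D - {c})" using ne by auto
  show ?thesis
  proof
    assume h: "a \<in> Add D \<and> c \<in> Cor (insert a D)"
    then have aD: "a \<notin> D" and cD: "c \<in> D" and d2: "dc (insert a (D - {c}))"
      using ne eq unfolding Add_def Cor_def by auto
    have "dc (D - {c})"
      unfolding dc_def
    proof (intro allI impI)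
      fix i j i' j' assume y: "(i, j) \<in> D - {c}" "i' \<le> i" "j' \<le> j"
      have "(i', j') \<in> insert a (D - {c})" using dcD[OF d2 _ y(2,3)] y(1) by auto
      moreover have "(i', j') \<noteq> a" using dcD[OF d _ y(2,3)] y(1) aD by auto
      ultimately show "(i', j') \<in> D - {c}" by auto
    qed
    then show "c \<in> Cor D \<and> a \<in> Add (D - {c})" using cD aD d2 unfolding Cor_def Add_def by auto
  next
    assume h: "c \<in> Cor D \<and> a \<in> Add (D - {c})"
    then have cD: "c \<in> D" and aD: "a \<notin> D" and d2: "dc (insert a (D - {c}))"
      using ne unfolding Add_def Cor_def by auto
    have "dc (insert a D)"
      unfolding dc_def
    proof (intro allI impI)
      fix i j i' j' assume y: "(i, j) \<in> insert a D" "i' \<le> i" "j' \<le> j"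
      show "(i', j') \<in> insert a D"
      proof (cases "(i, j) \<in> D")
        case True then show ?thesis using dcD[OF d True y(2,3)] by auto
      next
        case False
        then have "(i, j) \<in> insert a (D - {c})" using y by auto
        then show ?thesis using dcD[OF d2 _ y(2,3)] by auto
      qed
    qed
    then show "a \<in> Add D \<and> c \<in> Cor (insert a D)" using aD cD d2 eq unfolding Cor_def Add_def by auto
  qed
qed

lemma swap_sum:
  fixes h :: "nat \<times> nat \<Rightarrow> nat \<times> nat \<Rightarrow> nat"
  assumes f: "finite D" and d: "dc D"
  shows "(\<Sum>a\<in>Add D. \<Sum>c\<in>Cor (insert a D) - {a}. h a c) = (\<Sum>c\<in>Cor D. \<Sum>a\<in>Add (D - {c}) - {c}. h a c)"
proof -
  have fA: "finite (Add D)" using finite_Add[OF f d] .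
  have fC: "finite (Cor D)" using finite_Cor[OF f] .
  have "(\<Sum>a\<in>Add D. \<Sum>c\<in>Cor (insert a D) - {a}. h a c) = (\<Sum>(a, c)\<in>Sigma (Add D) (\<lambda>a. Cor (insert a D) - {a}). h a c)"
    by (rule sum.Sigma[OF fA]) (use f in \<open>auto intro: finite_Cor\<close>)
  also have "\<dots> = (\<Sum>(c, a)\<in>Sigma (Cor D) (\<lambda>c. Add (D - {c}) - {c}). h a c)"
  proof -
    let ?S = "Sigma (Add D) (\<lambda>a. Cor (insert a D) - {a})"
    have eqS: "Sigma (Cor D) (\<lambda>c. Add (D - {c}) - {c}) = prod.swap ` ?S"
    proof (intro equalityI subsetI)
      fix x assume x: "x \<in> Sigma (Cor D) (\<lambda>c. Add (D - {c}) - {c})"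
      obtain c a where xx: "x = (c, a)" by (cases x)
      have "(a, c) \<in> ?S" using x pair_equiv[OF d, of a c] unfolding xx by auto
      then show "x \<in> prod.swap ` ?S" unfolding xx by force
    next
      fix x assume x: "x \<in> prod.swap ` ?S"
      then obtain y where y: "y \<in> ?S" "x = prod.swap y" by blast
      obtain a c where yy: "y = (a, c)" by (cases y)
      have xx: "x = (c, a)" and ac: "(a, c) \<in> ?S" using y yy by auto
      then show "x \<in> Sigma (Cor D) (\<lambda>c. Add (D - {c}) - {c})" using pair_equiv[OF d, of a c] by auto
    qed
    have "(\<Sum>(c, a)\<in>Sigma (Cor D) (\<lambda>c. Add (D - {c}) - {c}). h a c) = (\<Sum>x\<in>?S. (\<lambda>(c, a). h a c) (prod.swap x))"
      unfolding eqS by (subst sum.reindex) auto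
    also have "\<dots> = (\<Sum>(a, c)\<in>?S. h a c)" by (rule sum.cong) auto
    finally show ?thesis by simp
  qed
  also have "\<dots> = (\<Sum>c\<in>Cor D. \<Sum>a\<in>Add (D - {c}) - {c}. h a c)"
    by (rule sum.Sigma[symmetric, OF fC]) (use f d in \<open>auto intro!: finite_Add simp: Cor_def\<close>)
  finally show ?thesis .
qed

lemma FF_up:
  assumes f: "finite D" and d: "dc D"
  shows "(\<Sum>a\<in>Add D. FF (insert a D)) = (card D + 1) * FF D"
  using f d
proof (induction "card D" arbitrary: D rule: less_induct)
  case less
  note f = less.prems(1) and d = less.prems(2)
  have fA: "finite (Add D)" using finite_Add[OF f d] .
  have fC: "finite (Cor D)" using finite_Cor[OF f] .
  define P where "P = (\<Sum>a\<in>Add D. \<Sum>c\<in>Cor (insert a D) - {a}. FF (insert a D - {c}))"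
  have step1: "FF (insert a D) = FF D + (\<Sum>c\<in>Cor (insert a D) - {a}. FF (insert a D - {c}))"
    if a: "a \<in> Add D" for a
  proof -
    have aD: "a \<notin> D" and d2: "dc (insert a D)" using a unfolding Add_def by auto
    have "FF (insert a D) = (\<Sum>c\<in>Cor (insert a D). FF (insert a D - {c}))"
      using FF_rec[OF d2] f by auto
    also have "\<dots> = FF (insert a D - {a}) + (\<Sum>c\<in>Cor (insert a D) - {a}. FF (insert a D - {c}))"
      by (rule sum.remove) (use f Add_Cor[OF a d] in \<open>auto intro: finite_Cor\<close>)
    also have "insert a D - {a} = D" using aD by auto
    finally show ?thesis .
  qed
  have G: "(\<Sum>a\<in>Add D. FF (insert a D)) = card (Add D) * FF D + P"
    unfolding P_def by (simp add: step1 sum.distrib)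
  have step3: "(\<Sum>a\<in>Add (D - {c}) - {c}. FF (insert a D - {c})) + FF D = card D * FF (D - {c})"
    if c: "c \<in> Cor D" for c
  proof -
    have cD: "c \<in> D" using c unfolding Cor_def by auto
    have d3: "dc (D - {c})" using c unfolding Cor_def by auto
    have pos: "card D > 0" using f cD card_gt_0_iff by blast
    then have lt: "card (D - {c}) < card D" using f cD by simp
    have IH: "(\<Sum>a\<in>Add (D - {c}). FF (insert a (D - {c}))) = (card (D - {c}) + 1) * FF (D - {c})"
      using less.hyps[OF lt] f d3 by auto
    have ca: "c \<in> Add (D - {c})" and ins: "insert c (D - {c}) = D" using Cor_Add[OF c d] by auto
    have fA3: "finite (Add (D - {c}))" using finite_Add[OF _ d3] f by auto
    have "(\<Sum>a\<in>Add (D - {c}). FF (insert a (D - {c}))) = FF (insert c (D - {c})) + (\<Sum>a\<in>Add (D - {c}) - {c}. FF (insert a (D - {c})))"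
      by (rule sum.remove[OF fA3 ca])
    also have "(\<Sum>a\<in>Add (D - {c}) - {c}. FF (insert a (D - {c}))) = (\<Sum>a\<in>Add (D - {c}) - {c}. FF (insert a D - {c}))"
      by (rule sum.cong) (auto simp: insert_Diff_if)
    finally have X: "(\<Sum>a\<in>Add (D - {c}). FF (insert a (D - {c}))) = FF D + (\<Sum>a\<in>Add (D - {c}) - {c}. FF (insert a D - {c}))"
      using ins by simp
    have c1: "card (D - {c}) + 1 = card D" using pos f cD by simp
    have "(\<Sum>a\<in>Add (D - {c}). FF (insert a (D - {c}))) = card D * FF (D - {c})" by (simp only: IH c1)
    then show ?thesis using X by linarith
  qed
  have step4: "P + card (Cor D) * FF D = card D * FF D"
  proof -
    have "P = (\<Sum>c\<in>Cor D. \<Sum>a\<in>Add (D - {c}) - {c}. FF (insert a D - {c}))"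
      unfolding P_def by (rule swap_sum[OF f d])
    then have "P + card (Cor D) * FF D = (\<Sum>c\<in>Cor D. (\<Sum>a\<in>Add (D - {c}) - {c}. FF (insert a D - {c})) + FF D)"
      by (simp add: sum.distrib)
    also have "\<dots> = (\<Sum>c\<in>Cor D. card D * FF (D - {c}))"
      by (rule sum.cong[OF refl]) (rule step3)
    also have "\<dots> = card D * FF D"
    proof (cases "D = {}")
      case True then show ?thesis by (simp add: Cor_def)
    next
      case False then show ?thesis using FF_rec[OF d f] by (simp add: sum_distrib_left)
    qed
    finally show ?thesis .
  qed
  show ?case using G step4 card_Add_Cor[OF f d] by (simp add: algebra_simps)
qed


lemma DS_bound:
  assumes D: "D \<in> DS n" and x: "(i, j) \<in> D"
  shows "i < n \<and> j < n"
proof -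
  have f: "finite D" and d: "dc D" and c: "card D = n" using D unfolding DS_def by auto
  have "(\<lambda>k. (k, j)) ` {..i} \<subseteq> D" using dcD[OF d x] by auto
  then have "card ((\<lambda>k. (k, j)) ` {..i}) \<le> n" using card_mono[OF f] c by blast
  moreover have "card ((\<lambda>k. (k, j)) ` {..i}) = Suc i" by (subst card_image) (auto simp: inj_on_def)
  moreover have "(\<lambda>k. (i, k)) ` {..j} \<subseteq> D" using dcD[OF d x] by auto
  then have "card ((\<lambda>k. (i, k)) ` {..j}) \<le> n" using card_mono[OF f] c by blast
  moreover have "card ((\<lambda>k. (i, k)) ` {..j}) = Suc j" by (subst card_image) (auto simp: inj_on_def)
  ultimately show ?thesis by simp
qed

lemma finite_DS: "finite (DS n)"
proof (rule finite_subset)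
  show "DS n \<subseteq> Pow ({..<n} \<times> {..<n})" using DS_bound by fastforce
qed auto

lemma DS_0: "DS 0 = {{}}"
  unfolding DS_def dc_def by auto

lemma sum_sq_step:
  "(\<Sum>E\<in>DS (Suc n). FF E * FF E) = Suc n * (\<Sum>D\<in>DS n. FF D * FF D)"
proof -
  have "(\<Sum>E\<in>DS (Suc n). FF E * FF E) = (\<Sum>E\<in>DS (Suc n). \<Sum>c\<in>Cor E. FF E * FF (E - {c}))"
  proof (rule sum.cong[OF refl])
    fix E assume E: "E \<in> DS (Suc n)"
    then have f: "finite E" and d: "dc E" and ne: "E \<noteq> {}" unfolding DS_def by auto
    show "FF E * FF E = (\<Sum>c\<in>Cor E. FF E * FF (E - {c}))"
      using FF_rec[OF d f ne] by (simp add: sum_distrib_left)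
  qed
  also have "\<dots> = (\<Sum>(E, c)\<in>Sigma (DS (Suc n)) Cor. FF E * FF (E - {c}))"
    by (rule sum.Sigma[OF finite_DS]) (auto simp: DS_def intro: finite_Cor)
  also have "\<dots> = (\<Sum>(D, a)\<in>Sigma (DS n) Add. FF (insert a D) * FF D)"
    apply (rule sum.reindex_bij_witness[where i = "\<lambda>(D, a). (insert a D, a)" and j = "\<lambda>(E, c). (E - {c}, c)"])
    subgoal for x by (cases x) (auto simp: Cor_def insert_absorb)
    subgoal for x
    proof -
      obtain E c where Pair: "x = (E, c)" by (cases x)
      assume "x \<in> Sigma (DS (Suc n)) Cor"
      then have E: "E \<in> DS (Suc n)" and c: "c \<in> Cor E" using Pair by auto
      have "E - {c} \<in> DS n" using E c unfolding DS_def Cor_def by auto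
      moreover have "c \<in> Add (E - {c})" using Cor_Add[OF c] E unfolding DS_def by auto
      ultimately show ?thesis using Pair by auto
    qed
    subgoal for x by (cases x) (auto simp: Add_def)
    subgoal for x
    proof -
      obtain D a where Pair: "x = (D, a)" by (cases x)
      assume "x \<in> Sigma (DS n) Add"
      then have D: "D \<in> DS n" and a: "a \<in> Add D" using Pair by auto
      have "insert a D \<in> DS (Suc n)" using D a unfolding DS_def Add_def by auto
      moreover have "a \<in> Cor (insert a D)" using Add_Cor[OF a] D unfolding DS_def by auto
      ultimately show ?thesis using Pair by auto
    qed
    subgoal for x by (cases x) (auto simp: Cor_def insert_absorb)
    done
  also have "\<dots> = (\<Sum>D\<in>DS n. \<Sum>a\<in>Add D. FF (insert a D) * FF D)"
    by (rule sum.Sigma[symmetric, OF finite_DS]) (auto simp: DS_def intro: finite_Add)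
  also have "\<dots> = (\<Sum>D\<in>DS n. Suc n * (FF D * FF D))"
  proof (rule sum.cong[OF refl])
    fix D assume D: "D \<in> DS n"
    then have f: "finite D" and d: "dc D" and c: "card D = n" unfolding DS_def by auto
    show "(\<Sum>a\<in>Add D. FF (insert a D) * FF D) = Suc n * (FF D * FF D)"
    proof -
      have "(\<Sum>a\<in>Add D. FF (insert a D) * FF D) = (\<Sum>a\<in>Add D. FF (insert a D)) * FF D"
        by (simp add: sum_distrib_right)
      also have "\<dots> = Suc n * FF D * FF D" using FF_up[OF f d] c by simp
      finally show ?thesis by (simp add: algebra_simps)
    qed
  qed
  finally show ?thesis by (simp add: sum_distrib_left)
qed

lemma sum_sq_fact: "(\<Sum>D\<in>DS n. FF D * FF D) = fact n"
proof (induction n)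
  case 0 then show ?case by (simp add: DS_0 FF_empty)
next
  case (Suc n) then show ?case by (simp add: sum_sq_step)
qed

lemma card_cells: "card (cells lam) = sum_list lam"
proof -
  have "cells lam = (SIGMA i:{..<length lam}. {..<lam ! i})" unfolding cells_def by auto
  then have "card (cells lam) = (\<Sum>i<length lam. card {..<lam ! i})" by (simp add: card_SigmaI)
  also have "\<dots> = sum_list lam" by (simp add: sum_list_sum_nth atLeast0LessThan)
  finally show ?thesis .
qed

lemma finite_cells: "finite (cells lam)"
proof -
  have "cells lam = (SIGMA i:{..<length lam}. {..<lam ! i})" unfolding cells_def by auto
  then show ?thesis by simp
qed

lemma num_SYT_FF: "num_SYT lam = FF (cells lam)"
  unfolding num_SYT_def FF_def SYT_def SYTs_def card_cells ..

lemma dc_cells: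
  assumes p: "is_partition lam"
  shows "dc (cells lam)"
  unfolding dc_def
proof (intro allI impI)
  fix i j i' j' assume h0: "(i, j) \<in> cells lam" "i' \<le> i" "j' \<le> j"
  then have h: "i < length lam" "j < lam ! i" "i' \<le> i" "j' \<le> j" unfolding cells_def by auto
  have "lam ! i \<le> lam ! i'"
  proof (cases "i' = i")
    case False
    then have "i' < i" using h by simp
    then show ?thesis using p h unfolding is_partition_def by (auto dest: sorted_wrt_nth_less)
  qed simp
  then show "(i', j') \<in> cells lam" using h unfolding cells_def by simp
qed

lemma cells_inj:
  assumes p: "is_partition lam" "is_partition mu" and eq: "cells lam = cells mu"
  shows "lam = mu"
proof -
  have pos: "\<And>i. i < length lam \<Longrightarrow> lam ! i > 0" "\<And>i. i < length mu \<Longrightarrow> mu ! i > 0"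
    using p unfolding is_partition_def by (auto simp: nth_mem)
  have len: "i < length lam \<longleftrightarrow> i < length mu" for i
  proof -
    have "i < length lam \<longleftrightarrow> (i, 0) \<in> cells lam" using pos(1) unfolding cells_def by auto
    also have "\<dots> \<longleftrightarrow> (i, 0) \<in> cells mu" using eq by simp
    also have "\<dots> \<longleftrightarrow> i < length mu" using pos(2) unfolding cells_def by auto
    finally show ?thesis .
  qed
  then have l: "length lam = length mu" by (metis less_irrefl nat_neq_iff)
  show ?thesis
  proof (rule nth_equalityI[OF l])
    fix i assume i: "i < length lam"
    have "j < lam ! i \<longleftrightarrow> j < mu ! i" for j
      using eq i l unfolding cells_def set_eq_iff by (metis (no_types, lifting) case_prod_conv mem_Collect_eq)
    then show "lam ! i = mu ! i" by (metis less_irrefl nat_neq_iff)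
  qed
qed

lemma cells_surj:
  assumes D: "D \<in> DS n"
  shows "\<exists>lam\<in>partitions_of n. cells lam = D"
proof -
  have f: "finite D" and d: "dc D" and c: "card D = n" using D unfolding DS_def by auto
  define L where "L = card {i. (i, 0) \<in> D}"
  have fin: "finite {i. (i, 0) \<in> D}"
    using finite_vimageI[OF f, of "\<lambda>i. (i, 0)"] by (simp add: vimage_def inj_on_def)
  have col: "{i. (i, 0) \<in> D} = {..<L}"
    unfolding L_def by (rule downset_nat[OF fin]) (use dcD[OF d] in auto)
  have colI: "(i, 0) \<in> D \<longleftrightarrow> i < L" for i using col by blast
  define lam where "lam = map (rl D) [0..<L]"
  have len: "length lam = L" unfolding lam_def by simp
  have nth: "i < L \<Longrightarrow> lam ! i = rl D i" for i unfolding lam_def by simp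
  have antimono: "rl D j \<le> rl D i" if "i \<le> j" for i j
  proof -
    have "x < rl D j \<Longrightarrow> x < rl D i" for x
      using mem_iff_rl[OF f d] dcD[OF d, of j x i x] that by auto
    show ?thesis
    proof (rule ccontr)
      assume "\<not> rl D j \<le> rl D i"
      then have "rl D i < rl D j" by simp
      then have "rl D i < rl D i" using \<open>\<And>x. x < rl D j \<Longrightarrow> x < rl D i\<close> by blast
      then show False by simp
    qed
  qed
  have part: "is_partition lam"
    unfolding is_partition_def
  proof
    show "sorted_wrt (\<ge>) lam"
      by (rule sorted_wrt_iff_nth_less[THEN iffD2]) (auto simp: len nth antimono)
    show "\<forall>p\<in>set lam. 0 < p"
      by (auto simp: lam_def colI[symmetric] mem_iff_rl[OF f d, symmetric])
  qed
  have cl: "cells lam = D"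
  proof (intro equalityI subsetI)
    fix x assume "x \<in> cells lam"
    then obtain i j where "x = (i, j)" "i < L" "j < rl D i" unfolding cells_def len by (auto simp: nth)
    then show "x \<in> D" using mem_iff_rl[OF f d] by auto
  next
    fix x assume x: "x \<in> D"
    obtain i j where xx: "x = (i, j)" by (cases x)
    have "(i, 0) \<in> D" using dcD[OF d, of i j i 0] x xx by auto
    then have "i < L" using colI by auto
    moreover have "j < rl D i" using x xx mem_iff_rl[OF f d] by auto
    ultimately show "x \<in> cells lam" unfolding cells_def xx using len nth by auto
  qed
  have "sum_list lam = n" using card_cells[of lam] cl c by simp
  then show ?thesis using part cl unfolding partitions_of_def by auto
qed

lemma bij_cells: "bij_betw cells (partitions_of n) (DS n)"
  unfolding bij_betw_def
proof
  show "inj_on cells (partitions_of n)"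
    unfolding inj_on_def partitions_of_def using cells_inj by auto
  show "cells ` partitions_of n = DS n"
  proof (intro equalityI subsetI)
    fix D assume "D \<in> cells ` partitions_of n"
    then obtain lam where lam: "lam \<in> partitions_of n" "D = cells lam" by auto
    then show "D \<in> DS n" unfolding DS_def partitions_of_def
      using finite_cells dc_cells card_cells by auto
  next
    fix D assume "D \<in> DS n"
    then show "D \<in> cells ` partitions_of n" using cells_surj by force
  qed
qed

lemma finite_partitions_of: "finite (partitions_of n)"
  using bij_betw_finite[OF bij_cells] finite_DS by blast

lemma sum_num_SYT_sq: "(\<Sum>lam\<in>partitions_of n. (num_SYT lam)^2) = fact n"
proof -
  have "(\<Sum>lam\<in>partitions_of n. (num_SYT lam)^2) = (\<Sum>lam\<in>partitions_of n. FF (cells lam) * FF (cells lam))"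
    by (simp add: num_SYT_FF power2_eq_square)
  also have "\<dots> = (\<Sum>D\<in>DS n. FF D * FF D)"
    by (rule sum.reindex_bij_betw[OF bij_cells])
  finally show ?thesis using sum_sq_fact by simp
qed


definition degle :: "'a::zero poly \<Rightarrow> int \<Rightarrow> bool" where
  "degle p k \<longleftrightarrow> p = 0 \<or> int (degree p) \<le> k"

lemma degle_0[simp]: "degle 0 k" by (simp add: degle_def)

lemma degle_mono: "degle p k \<Longrightarrow> k \<le> k' \<Longrightarrow> degle p k'"
  unfolding degle_def by auto

lemma degle_add: "degle p k \<Longrightarrow> degle q k \<Longrightarrow> degle (p + q) k"
  unfolding degle_def
proof -
  assume h: "p = 0 \<or> int (degree p) \<le> k" "q = 0 \<or> int (degree q) \<le> k"
  show "p + q = 0 \<or> int (degree (p + q)) \<le> k"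
  proof (cases "p = 0 \<or> q = 0")
    case True then show ?thesis using h by auto
  next
    case False
    then have "int (degree p) \<le> k" "int (degree q) \<le> k" using h by auto
    moreover have "degree (p + q) \<le> max (degree p) (degree q)" by (rule degree_add_le_max)
    ultimately show ?thesis by linarith
  qed
qed

lemma degle_uminus: "degle (p :: 'a::ab_group_add poly) k \<Longrightarrow> degle (- p) k"
  unfolding degle_def by auto

lemma degle_diff: "degle (p :: 'a::ab_group_add poly) k \<Longrightarrow> degle q k \<Longrightarrow> degle (p - q) k"
  using degle_add[of p k "- q"] degle_uminus[of q k] by simp

lemma degle_mult: "degle (p :: 'a::comm_semiring_1 poly) k \<Longrightarrow> degle q l \<Longrightarrow> degle (p * q) (k + l)"
  unfolding degle_def
proof -
  assume h: "p = 0 \<or> int (degree p) \<le> k" "q = 0 \<or> int (degree q) \<le> l"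
  show "p * q = 0 \<or> int (degree (p * q)) \<le> k + l"
  proof (cases "p = 0 \<or> q = 0")
    case True then show ?thesis by auto
  next
    case False
    then have "int (degree p) \<le> k" "int (degree q) \<le> l" using h by auto
    moreover have "degree (p * q) \<le> degree p + degree q" by (rule degree_mult_le)
    ultimately show ?thesis by linarith
  qed
qed

lemma degle_smult: "degle p k \<Longrightarrow> degle (smult c p) k"
  unfolding degle_def
proof -
  assume h: "p = 0 \<or> int (degree p) \<le> k"
  have "degree (smult c p) \<le> degree p" by (rule degree_smult_le)
  then show "smult c p = 0 \<or> int (degree (smult c p)) \<le> k" using h by auto
qed

lemma degle_pderiv:
  fixes p :: "'a::{comm_semiring_1,semiring_no_zero_divisors,semiring_char_0} poly"
  shows "degle p k \<Longrightarrow> degle (pderiv p) (k - 1)"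
  unfolding degle_def
proof -
  assume h: "p = 0 \<or> int (degree p) \<le> k"
  show "pderiv p = 0 \<or> int (degree (pderiv p)) \<le> k - 1"
  proof (cases "degree p = 0")
    case True then show ?thesis by (simp add: pderiv_eq_0_iff)
  next
    case False
    then have "p \<noteq> 0" by auto
    then show ?thesis using h False by (simp add: degree_pderiv)
  qed
qed

lemma degle_pderiv_iff:
  fixes p :: "'a::{comm_semiring_1,semiring_no_zero_divisors,semiring_char_0} poly"
  assumes "degle (pderiv p) (k - 1)" and "k \<ge> 0"
  shows "degle p k"
  unfolding degle_def
proof (cases "degree p = 0")
  case True then show "p = 0 \<or> int (degree p) \<le> k" using assms(2) by simp
next
  case False
  then have "pderiv p \<noteq> 0" by (simp add: pderiv_eq_0_iff)
  then have "int (degree (pderiv p)) \<le> k - 1" using assms(1) unfolding degle_def by auto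
  then show "p = 0 \<or> int (degree p) \<le> k" using False by (simp add: degree_pderiv)
qed

lemma degle_funpow_pderiv:
  fixes p :: "'a::{comm_semiring_1,semiring_no_zero_divisors,semiring_char_0} poly"
  shows "degle p k \<Longrightarrow> degle ((pderiv ^^ i) p) (k - int i)"
proof (induction i)
  case 0 then show ?case by simp
next
  case (Suc i)
  have "degle (pderiv ((pderiv ^^ i) p)) (k - int i - 1)" by (rule degle_pderiv[OF Suc.IH[OF Suc.prems]])
  then show ?case by (simp add: algebra_simps)
qed

lemma funpow_pderiv_diff:
  "(pderiv ^^ i) ((p :: 'a::idom poly) - q) = (pderiv ^^ i) p - (pderiv ^^ i) q"
  by (induction i) (auto simp: pderiv_diff)

lemma degle_sum: "finite S \<Longrightarrow> (\<And>x. x \<in> S \<Longrightarrow> degle (f x) k) \<Longrightarrow> degle (\<Sum>x\<in>S. f x) k"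
  by (induction S rule: finite_induct) (auto intro: degle_add)

lemma degle_pow: "degle (p :: 'a::comm_semiring_1 poly) k \<Longrightarrow> degle (p ^ m) (int m * k)"
proof (induction m)
  case 0 then show ?case by (simp add: degle_def)
next
  case (Suc m)
  then have "degle (p * p ^ m) (k + int m * k)" using degle_mult by blast
  then show ?case by (simp add: algebra_simps)
qed

lemma degle_pCons: "degle [:a, 1:] 1"
  unfolding degle_def by simp

lemma pderiv_y_pow: "pderiv ([:a, 1:] ^ Suc j) = smult (of_nat (Suc j)) ([:a :: 'a::idom, 1:] ^ j)"
proof -
  have "pderiv ([:a, 1:] ^ Suc j) = smult (of_nat (Suc j)) ([:a, 1:] ^ j) * pderiv [:a, 1:]"
    by (rule pderiv_power_Suc)
  also have "pderiv [:a :: 'a, 1:] = 1" by (simp add: pderiv_pCons)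
  finally show ?thesis by simp
qed

lemma appell_close:
  fixes A :: "nat \<Rightarrow> 'a::field_char_0 poly"
  assumes ap: "appell A"
  shows "degle (A m - [:coeff (A 1) 0, 1:] ^ m) (int m - 2)"
proof (induction m)
  case 0
  have "A 0 = 1" using ap unfolding appell_def by auto
  then show ?case by simp
next
  case (Suc k)
  let ?y = "[:coeff (A 1) 0, 1:]"
  have dA: "pderiv (A (Suc k)) = smult (of_nat (Suc k)) (A k)" using ap unfolding appell_def by auto
  have dY: "pderiv (?y ^ Suc k) = smult (of_nat (Suc k)) (?y ^ k)"
    by (rule pderiv_y_pow)
  have dD: "pderiv (A (Suc k) - ?y ^ Suc k) = smult (of_nat (Suc k)) (A k - ?y ^ k)"
    by (simp only: pderiv_diff dA dY smult_diff_right)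
  show ?case
  proof (cases k)
    case 0
    have A0: "A 0 = 1" using ap unfolding appell_def by auto
    have "pderiv (A 1 - ?y) = 0" using dD 0 A0 by simp
    then have "degree (A 1 - ?y) = 0" by (simp add: pderiv_eq_0_iff)
    moreover have "coeff (A 1 - ?y) 0 = 0" by simp
    ultimately have "A 1 - ?y = 0" by (metis degree_0_id pCons_0_0)
    then show ?thesis using 0 by simp
  next
    case (Suc k')
    have "degle (pderiv (A (Suc k) - ?y ^ Suc k)) (int k - 2)"
      unfolding dD by (rule degle_smult[OF Suc.IH])
    then have "degle (pderiv (A (Suc k) - ?y ^ Suc k)) (int (Suc k) - 2 - 1)"
      by (rule degle_mono) simp
    moreover have "int (Suc k) - 2 \<ge> 0" using Suc by simp
    ultimately show ?thesis by (rule degle_pderiv_iff)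
  qed
qed

definition ffx :: "int \<Rightarrow> nat \<Rightarrow> int" where
  "ffx x i = (\<Prod>k<i. x - int k)"

lemma ffx_Suc: "ffx x (Suc i) = ffx x i * (x - int i)"
  unfolding ffx_def by simp

lemma ffx_zero: "i > m \<Longrightarrow> ffx (int m) i = 0"
  unfolding ffx_def by (rule prod_zero) auto

lemma ffx_nonzero: "ffx (int m) i \<noteq> 0 \<Longrightarrow> i \<le> m"
  using ffx_zero[of m i] by (cases "i > m") auto

lemma funpow_pderiv_power:
  fixes y :: "'a::field_char_0 poly"
  assumes y: "y = [:a, 1:]"
  shows "(pderiv ^^ i) (y ^ m) = smult (of_int (ffx (int m) i)) (y ^ (m - i))"
proof (induction i)
  case 0 then show ?case by (simp add: ffx_def)
next
  case (Suc i)
  have "(pderiv ^^ Suc i) (y ^ m) = smult (of_int (ffx (int m) i)) (pderiv (y ^ (m - i)))"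
    using Suc by (simp add: pderiv_smult)
  also have "\<dots> = smult (of_int (ffx (int m) (Suc i))) (y ^ (m - Suc i))"
  proof (cases "m - i")
    case 0
    then have "i \<ge> m" by simp
    then have "ffx (int m) (Suc i) = 0"
      by (cases "i = m") (auto simp: ffx_Suc ffx_zero)
    then show ?thesis using 0 by simp
  next
    case (Suc j)
    then have "m - Suc i = j" "i < m" by auto
    have "pderiv (y ^ (m - i)) = smult (of_nat (Suc j)) (y ^ j)" unfolding Suc y by (rule pderiv_y_pow)
    moreover have "(of_nat (Suc j) :: 'a) = of_int (int m - int i)"
    proof -
      have "Suc j = m - i" using Suc by simp
      then have "(of_nat (Suc j) :: 'a) = of_nat m - of_nat i" using \<open>i < m\<close> by (simp add: of_nat_diff)
      then show ?thesis by simp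
    qed
    ultimately have e: "pderiv (y ^ (m - i)) = smult (of_int (int m - int i)) (y ^ j)" by simp
    show ?thesis unfolding e ffx_Suc \<open>m - Suc i = j\<close> by (simp add: smult_smult mult.commute)
  qed
  finally show ?case .
qed


lemma det_col_scale:
  fixes c :: "nat \<Rightarrow> 'a::comm_ring_1"
  shows "det (mat n n (\<lambda>(i, j). c j * f i j)) = (\<Prod>j<n. c j) * det (mat n n (\<lambda>(i, j). f i j))"
proof -
  have "det (mat n n (\<lambda>(i, j). c j * f i j)) =
      (\<Sum>p\<in>{p. p permutes {0..<n}}. signof p * (\<Prod>i = 0..<n. c (p i) * f i (p i)))"
    by (subst det_def') auto
  also have "\<dots> = (\<Sum>p\<in>{p. p permutes {0..<n}}. (\<Prod>j<n. c j) * (signof p * (\<Prod>i = 0..<n. f i (p i))))"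
  proof (rule sum.cong[OF refl])
    fix p assume p: "p \<in> {p. p permutes {0..<n}}"
    have "(\<Prod>i = 0..<n. c (p i)) = (\<Prod>j = 0..<n. c j)"
      using prod.permute[of p "{0..<n}" c] p by (simp add: comp_def)
    then show "signof p * (\<Prod>i = 0..<n. c (p i) * f i (p i)) = (\<Prod>j<n. c j) * (signof p * (\<Prod>i = 0..<n. f i (p i)))"
      by (simp add: prod.distrib atLeast0LessThan algebra_simps)
  qed
  also have "\<dots> = (\<Prod>j<n. c j) * det (mat n n (\<lambda>(i, j). f i j))"
    by (subst det_def'[of _ n]) (auto simp: sum_distrib_left)
  finally show ?thesis .
qed

lemma det_ff:
  fixes xs :: "int list"
  shows "det (mat (length xs) (length xs) (\<lambda>(i, j). ffx (xs ! j) i)) = (\<Prod>j<length xs. \<Prod>i<j. xs ! j - xs ! i)"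
proof (induction xs)
  case Nil
  show ?case by (simp add: det_dim_zero)
next
  case (Cons x0 xs)
  define n where "n = length xs"
  define ys where "ys = x0 # xs"
  define M where "M = mat (Suc n) (Suc n) (\<lambda>(i, j). ffx (ys ! j) i)"
  define L :: "int mat" where "L = mat (Suc n) (Suc n) (\<lambda>(i, k). (if k = i then 1 else 0) + (if Suc k = i then - (x0 - int k) else 0))"
  have M: "M \<in> carrier_mat (Suc n) (Suc n)" and L: "L \<in> carrier_mat (Suc n) (Suc n)"
    unfolding M_def L_def by auto
  have detL: "det L = 1"
  proof -
    have "det L = prod_list (diag_mat L)"
      by (rule det_lower_triangular[OF _ L]) (auto simp: L_def)
    also have "diag_mat L = map (\<lambda>i. 1) [0..<Suc n]"
      unfolding diag_mat_def L_def by auto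
    finally show ?thesis by (simp add: map_replicate_const)
  qed
  define B where "B = mat (Suc n) (Suc n) (\<lambda>(i, j). if i = 0 then 1 else (ys ! j - x0) * ffx (ys ! j) (i - 1))"
  have LM: "L * M = B"
  proof (rule eq_matI)
    fix i j assume i: "i < dim_row B" and j: "j < dim_col B"
    then have i': "i < Suc n" and j': "j < Suc n" unfolding B_def by auto
    have "(L * M) $$ (i, j) = (\<Sum>k\<in>{0..<Suc n}. L $$ (i, k) * M $$ (k, j))"
      using i' j' L M by (simp add: scalar_prod_def)
    also have "\<dots> = (\<Sum>k\<in>{0..<Suc n}. (if k = i then M $$ (k, j) else 0) + (if Suc k = i then - (x0 - int k) * M $$ (k, j) else 0))"
      by (rule sum.cong[OF refl]) (auto simp: L_def i' algebra_simps)
    also have "\<dots> = M $$ (i, j) + (if i = 0 then 0 else - (x0 - int (i - 1)) * M $$ (i - 1, j))"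
    proof -
      have s1: "(\<Sum>k\<in>{0..<Suc n}. (if k = i then M $$ (k, j) else 0)) = M $$ (i, j)"
        using i' by simp
      have s2: "(\<Sum>k\<in>{0..<Suc n}. (if Suc k = i then - (x0 - int k) * M $$ (k, j) else 0)) =
          (if i = 0 then 0 else - (x0 - int (i - 1)) * M $$ (i - 1, j))"
      proof (cases i)
        case 0 then show ?thesis by simp
      next
        case (Suc i0)
        have "(\<Sum>k\<in>{0..<Suc n}. (if Suc k = i then - (x0 - int k) * M $$ (k, j) else 0)) =
            (\<Sum>k\<in>{0..<Suc n}. (if k = i0 then - (x0 - int k) * M $$ (k, j) else 0))"
          using Suc by (intro sum.cong) auto
        also have "\<dots> = - (x0 - int i0) * M $$ (i0, j)" using Suc i' by simp
        finally show ?thesis using Suc by simp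
      qed
      show ?thesis by (simp only: sum.distrib s1 s2)
    qed
    also have "\<dots> = B $$ (i, j)"
    proof (cases i)
      case 0 then show ?thesis using j' unfolding M_def B_def by (simp add: ffx_def)
    next
      case (Suc i0)
      then show ?thesis using i' j' unfolding M_def B_def by (simp add: ffx_Suc algebra_simps)
    qed
    finally show "(L * M) $$ (i, j) = B $$ (i, j)" .
  qed (auto simp: L_def B_def M_def)
  have detB: "det B = det M"
    using det_mult[OF L M] LM detL by simp
  have B: "B \<in> carrier_mat (Suc n) (Suc n)" unfolding B_def by auto
  have "det B = (\<Sum>i<Suc n. B $$ (i, 0) * cofactor B i 0)"
    by (rule laplace_expansion_column[OF B]) simp
  also have "\<dots> = B $$ (0, 0) * cofactor B 0 0 + (\<Sum>i<n. B $$ (Suc i, 0) * cofactor B (Suc i) 0)"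
    by (rule sum.lessThan_Suc_shift)
  also have "(\<Sum>i<n. B $$ (Suc i, 0) * cofactor B (Suc i) 0) = 0"
    by (rule sum.neutral) (auto simp: B_def ys_def)
  also have "B $$ (0, 0) = 1" by (simp add: B_def)
  also have "cofactor B 0 0 = det (mat_delete B 0 0)" by (simp add: cofactor_def)
  also have "mat_delete B 0 0 = mat n n (\<lambda>(i, j). (xs ! j - x0) * ffx (xs ! j) i)"
    by (rule eq_matI) (auto simp: mat_delete_def B_def ys_def)
  also have "det \<dots> = (\<Prod>j<n. xs ! j - x0) * det (mat n n (\<lambda>(i, j). ffx (xs ! j) i))"
    by (rule det_col_scale)
  also have "det (mat n n (\<lambda>(i, j). ffx (xs ! j) i)) = (\<Prod>j<n. \<Prod>i<j. xs ! j - xs ! i)"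
    using Cons.IH unfolding n_def .
  finally have "det M = (\<Prod>j<n. xs ! j - x0) * (\<Prod>j<n. \<Prod>i<j. xs ! j - xs ! i)"
    using detB by simp
  also have "\<dots> = (\<Prod>j<Suc n. \<Prod>i<j. ys ! j - ys ! i)"
  proof -
    have "(\<Prod>j<Suc n. \<Prod>i<j. ys ! j - ys ! i) = (\<Prod>j<n. \<Prod>i<Suc j. ys ! Suc j - ys ! i)"
      by (subst prod.lessThan_Suc_shift) simp
    also have "\<dots> = (\<Prod>j<n. (xs ! j - x0) * (\<Prod>i<j. xs ! j - xs ! i))"
      by (rule prod.cong[OF refl], subst prod.lessThan_Suc_shift) (simp add: ys_def)
    finally show ?thesis by (simp add: prod.distrib)
  qed
  finally show ?case unfolding M_def ys_def n_def by simp
qed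


lemma prod_diff_degle:
  fixes f g :: "nat \<Rightarrow> 'a::comm_ring_1 poly"
  assumes "finite I" and "\<And>i. i \<in> I \<Longrightarrow> degle (g i) (d i)" and "\<And>i. i \<in> I \<Longrightarrow> degle (f i - g i) (d i - 2)"
  shows "degle (prod f I - prod g I) (sum d I - 2) \<and> degle (prod g I) (sum d I)"
  using assms
proof (induction I rule: finite_induct)
  case empty then show ?case by (simp add: degle_def)
next
  case (insert x F)
  have IH: "degle (prod f F - prod g F) (sum d F - 2)" "degle (prod g F) (sum d F)"
    using insert by auto
  have gx: "degle (g x) (d x)" and fgx: "degle (f x - g x) (d x - 2)" using insert by auto
  have pf: "degle (prod f F) (sum d F)"
  proof -
    have "prod f F = prod g F + (prod f F - prod g F)" by simp
    moreover have "degle (prod f F - prod g F) (sum d F)" using IH(1) by (rule degle_mono) simp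
    ultimately show ?thesis using IH(2) degle_add by metis
  qed
  have eq: "prod f (insert x F) - prod g (insert x F) = (f x - g x) * prod f F + g x * (prod f F - prod g F)"
    using insert by (simp add: algebra_simps)
  have "degle ((f x - g x) * prod f F) (d x - 2 + sum d F)" by (rule degle_mult[OF fgx pf])
  moreover have "degle (g x * (prod f F - prod g F)) (d x + (sum d F - 2))" by (rule degle_mult[OF gx IH(1)])
  ultimately have "degle (prod f (insert x F) - prod g (insert x F)) (d x + sum d F - 2)"
    unfolding eq by (intro degle_add) (auto elim: degle_mono)
  moreover have "degle (prod g (insert x F)) (d x + sum d F)"
    using insert degle_mult[OF gx IH(2)] by simp
  ultimately show ?case using insert by simp
qed

lemma prod_smult_pow:
  fixes q :: "'a::comm_ring_1 poly"
  shows "finite I \<Longrightarrow> (\<Prod>i\<in>I. smult (c i) (q ^ e i)) = smult (\<Prod>i\<in>I. c i) (q ^ (\<Sum>i\<in>I. e i))"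
  by (induction I rule: finite_induct) (auto simp: power_add mult_smult_left mult_smult_right smult_smult mult.commute)

lemma shifted_nth: "k < length lam \<Longrightarrow> shifted_parts lam ! k = rev lam ! k + k"
  unfolding shifted_parts_def by simp

lemma length_shifted[simp]: "length (shifted_parts lam) = length lam"
  unfolding shifted_parts_def by simp

lemma sum_shifted_perm:
  assumes p: "p permutes {0..<length lam}"
  shows "(\<Sum>i\<in>{0..<length lam}. int (shifted_parts lam ! p i) - int i) = int (sum_list lam)"
proof -
  let ?r = "length lam" and ?ns = "shifted_parts lam"
  have "(\<Sum>i\<in>{0..<?r}. int (?ns ! p i) - int i) = (\<Sum>i\<in>{0..<?r}. int (?ns ! p i)) - (\<Sum>i\<in>{0..<?r}. int i)"
    by (simp add: sum_subtractf)
  also have "(\<Sum>i\<in>{0..<?r}. int (?ns ! p i)) = (\<Sum>i\<in>{0..<?r}. int (?ns ! i))"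
    using sum.permute[OF p, of "\<lambda>i. int (?ns ! i)"] by (simp add: comp_def)
  also have "(\<Sum>i\<in>{0..<?r}. int (?ns ! i)) = (\<Sum>i\<in>{0..<?r}. int (rev lam ! i) + int i)"
    by (rule sum.cong) (auto simp: shifted_nth)
  also have "\<dots> - (\<Sum>i\<in>{0..<?r}. int i) = (\<Sum>i\<in>{0..<?r}. int (rev lam ! i))"
    by (simp add: sum.distrib)
  also have "\<dots> = int (sum_list (rev lam))"
    by (simp add: sum_list_sum_nth of_nat_sum[symmetric] del: of_nat_sum)
  finally show ?thesis by simp
qed

lemma vandermonde_pos:
  assumes p: "is_partition lam"
  shows "vandermonde (shifted_parts lam) \<noteq> 0"
proof -
  have s: "sorted_wrt (\<le>) (rev lam)" using p unfolding is_partition_def by (simp add: sorted_wrt_rev)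
  have "int (shifted_parts lam ! j) - int (shifted_parts lam ! i) \<noteq> 0" if "i < j" "j < length lam" for i j
  proof -
    have "rev lam ! i \<le> rev lam ! j" using sorted_wrt_nth_less[OF s, of i j] that by simp
    then show ?thesis using that by (simp add: shifted_nth)
  qed
  then show ?thesis unfolding vandermonde_def by (simp add: prod_zero_iff)
qed


lemma signof_mult_poly: "(signof p :: 'a::comm_ring_1 poly) * q = smult (of_int (sign p)) q"
  by (simp add: of_int_poly)

lemma det_G:
  fixes a :: "'a::field_char_0"
  assumes y: "y = [:a, 1:]"
  shows "det (mat (length lam) (length lam) (\<lambda>(i, j). (pderiv ^^ i) (y ^ (shifted_parts lam ! j))))
         = smult (of_int (vandermonde (shifted_parts lam))) (y ^ sum_list lam)"
proof -
  let ?r = "length lam" and ?ns = "shifted_parts lam" and ?N = "sum_list lam"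
  let ?c = "\<lambda>p. (\<Prod>i = 0..<?r. ffx (int (?ns ! p i)) i)"
  have prodp: "(\<Prod>i = 0..<?r. (pderiv ^^ i) (y ^ (?ns ! p i))) = smult (of_int (?c p)) (y ^ ?N)"
    if p: "p permutes {0..<?r}" for p
  proof -
    have "(\<Prod>i = 0..<?r. (pderiv ^^ i) (y ^ (?ns ! p i))) =
        (\<Prod>i = 0..<?r. smult (of_int (ffx (int (?ns ! p i)) i)) (y ^ (?ns ! p i - i)))"
      by (rule prod.cong[OF refl]) (rule funpow_pderiv_power[OF y])
    also have "\<dots> = smult (\<Prod>i = 0..<?r. of_int (ffx (int (?ns ! p i)) i)) (y ^ (\<Sum>i = 0..<?r. ?ns ! p i - i))"
      by (rule prod_smult_pow) simp
    also have "\<dots> = smult (of_int (?c p)) (y ^ ?N)"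
    proof (cases "?c p = 0")
      case True
      have z: "(\<Prod>i = 0..<?r. of_int (ffx (int (?ns ! p i)) i)) = (0::'a)"
        by (simp only: of_int_prod[symmetric] True of_int_0)
      show ?thesis by (simp only: z True of_int_0 smult_0_left)
    next
      case False
      then have le: "i \<le> ?ns ! p i" if "i < ?r" for i
        using that ffx_nonzero by (auto simp: prod_zero_iff)
      have "int (\<Sum>i = 0..<?r. ?ns ! p i - i) = (\<Sum>i = 0..<?r. int (?ns ! p i) - int i)"
        using le by (simp add: of_nat_diff)
      also have "\<dots> = int ?N" by (rule sum_shifted_perm[OF p])
      finally have "(\<Sum>i = 0..<?r. ?ns ! p i - i) = ?N" by (simp only: of_nat_eq_iff)
      then show ?thesis by (simp add: of_int_prod[symmetric] del: of_int_prod)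
    qed
    finally show ?thesis .
  qed
  have "det (mat ?r ?r (\<lambda>(i, j). (pderiv ^^ i) (y ^ (?ns ! j)))) =
      (\<Sum>p\<in>{p. p permutes {0..<?r}}. signof p * (\<Prod>i = 0..<?r. (pderiv ^^ i) (y ^ (?ns ! p i))))"
    by (subst det_def'[of _ ?r]) auto
  also have "\<dots> = (\<Sum>p\<in>{p. p permutes {0..<?r}}. smult (of_int (sign p * ?c p)) (y ^ ?N))"
    by (rule sum.cong[OF refl]) (simp add: prodp signof_mult_poly smult_smult mult.commute)
  also have "\<dots> = smult (of_int (\<Sum>p\<in>{p. p permutes {0..<?r}}. sign p * ?c p)) (y ^ ?N)"
    by (simp add: smult_sum)
  also have "(\<Sum>p\<in>{p. p permutes {0..<?r}}. sign p * ?c p) = det (mat ?r ?r (\<lambda>(i, j). ffx (int (?ns ! j)) i))"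
    by (subst det_def'[of _ ?r]) auto
  also have "\<dots> = det (mat (length (map int ?ns)) (length (map int ?ns)) (\<lambda>(i, j). ffx (map int ?ns ! j) i))"
    by (intro arg_cong[where f = det] eq_matI) auto
  also have "\<dots> = vandermonde ?ns"
    unfolding det_ff vandermonde_def by simp
  finally show ?thesis .
qed


lemma wronsk_close:
  fixes A :: "nat \<Rightarrow> 'a::field_char_0 poly"
  assumes ap: "appell A" and y: "y = [:coeff (A 1) 0, 1:]"
  shows "degle (wronskian (map A (shifted_parts lam)) - smult (of_int (vandermonde (shifted_parts lam))) (y ^ sum_list lam))
           (int (sum_list lam) - 2)"
proof -
  let ?r = "length lam" and ?ns = "shifted_parts lam" and ?N = "sum_list lam"
  let ?f = "\<lambda>i j. (pderiv ^^ i) (A (?ns ! j))" and ?g = "\<lambda>i j. (pderiv ^^ i) (y ^ (?ns ! j))"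
  have W: "wronskian (map A ?ns) = det (mat ?r ?r (\<lambda>(i, j). ?f i j))"
    unfolding wronskian_def by (intro arg_cong[where f = det] eq_matI) auto
  have dW: "det (mat ?r ?r (\<lambda>(i, j). ?f i j)) = (\<Sum>p\<in>{p. p permutes {0..<?r}}. signof p * (\<Prod>i = 0..<?r. ?f i (p i)))"
    by (subst det_def'[of _ ?r]) auto
  have dG: "det (mat ?r ?r (\<lambda>(i, j). ?g i j)) = (\<Sum>p\<in>{p. p permutes {0..<?r}}. signof p * (\<Prod>i = 0..<?r. ?g i (p i)))"
    by (subst det_def'[of _ ?r]) auto
  have "wronskian (map A ?ns) - smult (of_int (vandermonde ?ns)) (y ^ ?N) =
      det (mat ?r ?r (\<lambda>(i, j). ?f i j)) - det (mat ?r ?r (\<lambda>(i, j). ?g i j))"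
    unfolding W det_G[OF y] ..
  also have "\<dots> = (\<Sum>p\<in>{p. p permutes {0..<?r}}. smult (of_int (sign p)) ((\<Prod>i = 0..<?r. ?f i (p i)) - (\<Prod>i = 0..<?r. ?g i (p i))))"
    unfolding dW dG by (simp add: sum_subtractf[symmetric] signof_mult_poly smult_diff_right)
  finally have eq: "wronskian (map A ?ns) - smult (of_int (vandermonde ?ns)) (y ^ ?N) = \<dots>" .
  show ?thesis
    unfolding eq
  proof (rule degle_sum)
    show "finite {p. p permutes {0..<?r}}" by (rule finite_permutations) simp
  next
    fix p assume p: "p \<in> {p. p permutes {0..<?r}}"
    then have p': "p permutes {0..<?r}" by simp
    define d where "d i = int (?ns ! p i) - int i" for i
    have pi: "p i < ?r" if "i \<in> {0..<?r}" for i using p' that by (auto dest: permutes_in_image)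
    have "degle ((\<Prod>i = 0..<?r. ?f i (p i)) - (\<Prod>i = 0..<?r. ?g i (p i))) (sum d {0..<?r} - 2)"
    proof (rule conjunct1[OF prod_diff_degle])
      fix i assume i: "i \<in> {0..<?r}"
      have "degle (y ^ (?ns ! p i)) (int (?ns ! p i) * 1)"
        by (rule degle_pow) (simp add: y degle_pCons)
      then have "degle (?g i (p i)) (int (?ns ! p i) * 1 - int i)" by (rule degle_funpow_pderiv)
      then show "degle (?g i (p i)) (d i)" by (simp add: d_def)
      have "degle (A (?ns ! p i) - y ^ (?ns ! p i)) (int (?ns ! p i) - 2)"
        using appell_close[OF ap] y by simp
      then have "degle ((pderiv ^^ i) (A (?ns ! p i) - y ^ (?ns ! p i))) (int (?ns ! p i) - 2 - int i)"
        by (rule degle_funpow_pderiv)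
      then show "degle (?f i (p i) - ?g i (p i)) (d i - 2)"
        by (simp add: d_def funpow_pderiv_diff algebra_simps)
    qed simp
    moreover have "sum d {0..<?r} = int ?N" unfolding d_def by (rule sum_shifted_perm[OF p'])
    ultimately have "degle ((\<Prod>i = 0..<?r. ?f i (p i)) - (\<Prod>i = 0..<?r. ?g i (p i))) (int ?N - 2)" by simp
    then show "degle (smult (of_int (sign p)) ((\<Prod>i = 0..<?r. ?f i (p i)) - (\<Prod>i = 0..<?r. ?g i (p i)))) (int ?N - 2)"
      by (rule degle_smult)
  qed
qed

lemma schur_close:
  fixes A :: "nat \<Rightarrow> 'a::field_char_0 poly"
  assumes ap: "appell A" and p: "is_partition lam" and y: "y = [:coeff (A 1) 0, 1:]"
  shows "degle (appell_schur A lam - y ^ sum_list lam) (int (sum_list lam) - 2)"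
proof -
  let ?ns = "shifted_parts lam" and ?N = "sum_list lam"
  let ?V = "of_int (vandermonde ?ns) :: 'a"
  have V: "?V \<noteq> 0" using vandermonde_pos[OF p] by simp
  have "appell_schur A lam - y ^ ?N = smult (inverse ?V) (wronskian (map A ?ns) - smult ?V (y ^ ?N))"
    using V unfolding appell_schur_def by (simp add: smult_diff_right smult_smult)
  then show ?thesis using wronsk_close[OF ap y, of lam] by (simp add: degle_smult)
qed


lemma smult_eq_mult: "smult a p = [:a:] * p" by simp

lemma sq_gen:
  fixes k a b :: "'b::comm_ring_1"
  shows "k * (a + b)^2 = k * 1 * a^2 + 2 * a * (k * b) + k * (b^2)"
  by (simp add: algebra_simps power2_eq_square)

lemma lin_gen:
  fixes k a b :: "'b::comm_ring_1"
  shows "k * (a + b) = k * 1 * a + k * b"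
  by (simp add: algebra_simps)

lemma var_gen:
  fixes u e f :: "'b::comm_ring_1"
  shows "u^2 + 2 * u * e + f - (u + e)^2 = f - e^2"
  by (simp add: algebra_simps power2_eq_square)

lemma sq_expand:
  fixes a b :: "'a::comm_ring_1 poly"
  shows "smult c ((a + b)^2) = smult c 1 * a^2 + 2 * a * smult c b + smult c (b^2)"
  unfolding smult_eq_mult by (rule sq_gen)

lemma lin_expand:
  fixes a b :: "'a::comm_ring_1 poly"
  shows "smult c (a + b) = smult c 1 * a + smult c b"
  unfolding smult_eq_mult by (rule lin_gen)

theorem corollary5p4:
  fixes A :: "nat \<Rightarrow> 'a::field_char_0 poly" and n :: nat
  assumes "appell A" and "n \<ge> 2"
  shows "degree (plancherel_expect n (\<lambda>lam. (appell_schur A lam)\<^sup>2)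
                 - (plancherel_expect n (appell_schur A))\<^sup>2) \<le> 2 * n - 4"
proof -
  define y :: "'a poly" where "y = [:coeff (A 1) 0, 1:]"
  define Q where "Q lam = appell_schur A lam - y ^ n" for lam
  define P where "P lam = (plancherel n lam :: 'a)" for lam
  let ?S = "partitions_of n"
  have fS: "finite ?S" by (rule finite_partitions_of)
  have Qd: "degle (Q lam) (int n - 2)" if "lam \<in> ?S" for lam
    using schur_close[OF assms(1) _ y_def, of lam] that unfolding Q_def partitions_of_def by auto
  have AQ: "appell_schur A lam = y ^ n + Q lam" for lam unfolding Q_def by simp
  have sumP: "(\<Sum>lam\<in>?S. P lam) = 1"
  proof -
    have "(\<Sum>lam\<in>?S. P lam) = (\<Sum>lam\<in>?S. of_nat (num_SYT lam ^ 2)) / of_nat (fact n)"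
      unfolding P_def plancherel_def by (simp add: sum_divide_distrib)
    also have "(\<Sum>lam\<in>?S. of_nat (num_SYT lam ^ 2)) = (of_nat (fact n) :: 'a)"
      using sum_num_SYT_sq[of n] by (metis of_nat_sum)
    finally show ?thesis by simp
  qed
  have sum1: "(\<Sum>lam\<in>?S. smult (P lam) 1) = (1 :: 'a poly)"
  proof -
    have "(\<Sum>lam\<in>?S. smult (P lam) 1) = smult (\<Sum>lam\<in>?S. P lam) (1 :: 'a poly)" by (rule smult_sum[symmetric])
    then show ?thesis using sumP by simp
  qed
  define EQ where "EQ = (\<Sum>lam\<in>?S. smult (P lam) (Q lam))"
  define EQ2 where "EQ2 = (\<Sum>lam\<in>?S. smult (P lam) (Q lam ^ 2))"
  have E2: "plancherel_expect n (\<lambda>lam. (appell_schur A lam)\<^sup>2) = (y ^ n)^2 + 2 * y ^ n * EQ + EQ2"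
  proof -
    have "plancherel_expect n (\<lambda>lam. (appell_schur A lam)\<^sup>2) =
        (\<Sum>lam\<in>?S. smult (P lam) 1 * (y ^ n)^2 + 2 * y ^ n * smult (P lam) (Q lam) + smult (P lam) (Q lam ^ 2))"
      unfolding plancherel_expect_def P_def[symmetric] AQ by (rule sum.cong[OF refl]) (rule sq_expand)
    also have "\<dots> = (\<Sum>lam\<in>?S. smult (P lam) 1) * (y ^ n)^2 + 2 * y ^ n * EQ + EQ2"
      unfolding EQ_def EQ2_def by (simp add: sum.distrib sum_distrib_left sum_distrib_right)
    finally show ?thesis using sum1 by simp
  qed
  have E1: "plancherel_expect n (appell_schur A) = y ^ n + EQ"
  proof -
    have "plancherel_expect n (appell_schur A) = (\<Sum>lam\<in>?S. smult (P lam) 1 * y ^ n + smult (P lam) (Q lam))"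
      unfolding plancherel_expect_def P_def[symmetric] AQ by (rule sum.cong[OF refl]) (rule lin_expand)
    also have "\<dots> = (\<Sum>lam\<in>?S. smult (P lam) 1) * y ^ n + EQ"
      unfolding EQ_def by (simp add: sum.distrib sum_distrib_right)
    finally show ?thesis using sum1 by simp
  qed
  have diff: "plancherel_expect n (\<lambda>lam. (appell_schur A lam)\<^sup>2) - (plancherel_expect n (appell_schur A))\<^sup>2 = EQ2 - EQ^2"
    unfolding E1 E2 by (rule var_gen)
  have dEQ: "degle EQ (int n - 2)"
    unfolding EQ_def by (rule degle_sum[OF fS]) (rule degle_smult[OF Qd])
  have dEQ2: "degle EQ2 (int 2 * (int n - 2))"
    unfolding EQ2_def by (rule degle_sum[OF fS]) (rule degle_smult[OF degle_pow[OF Qd]])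
  have "degle (EQ2 - EQ^2) (int 2 * (int n - 2))"
    by (rule degle_diff[OF dEQ2 degle_pow[OF dEQ]])
  then have "degle (EQ2 - EQ^2) (int (2 * n - 4))" using assms(2) by (simp add: of_nat_diff)
  then show ?thesis unfolding diff degle_def by auto
qed


end
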